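(* Let $X\subset\mathbb{P}^3$ be an irreducible surface of degree at least two, not a cone, with $\operatorname{trop}(X)$ smooth. Let $F$ be a two-dimensional cell of $\operatorname{trop}(X)$ such that $e_i\notin\langle F\rangle$ for all $i\in\{0,1,2,3\}$. Then for every $p$ in the relative interior of $F$, the only tropical tangent at $p$ is $-p$.
   Context: $\mathbb{K}$ algebraically closed of characteristic zero with nontrivial non-Archimedean valuation $\nu$ trivial on integers; tropicalization is $-\nu$ coordinatewise followed by Euclidean closure. $X=V(f)$ with $f$ involving all variables; torus coordinates $x_i/x_0$ on $\mathbb{P}^3$ and $y_i/y_0$ on the dual space. $\operatorname{trop}(X)\subset\mathbb{R}^3$ carries the polyhedral structure dual to the regular subdivision of the Newton polytope induced by the valuations of the coefficients of $f$; smooth means this subdivision is a unimodular triangulation. $e_1,e_2,e_3$ standard basis, $e_0=-e_1-e_2-e_3$; $\langle F\rangle$ is the linear span of differences of points of $F$. A tropical tangent at $p$ is a point $q\in\mathbb{R}^3$ such that some smooth $x\in X\cap(\mathbb{K}^* )^3$ with $\operatorname{trop}(x)=p$ has tangent plane lying in the dual torus and tropicalizing to $q$. *)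

theory Defs
  imports "HOL-Analysis.Analysis" "HOL-Library.Poly_Mapping"
    "HOL-Computational_Algebra.Polynomial" "HOL-Computational_Algebra.Factorial_Ring"
begin

text \<open>Homogeneous polynomials in the variables x0,x1,x2,x3 over a field 'k are represented as
  elements of the polynomial ring ((nat =>0 nat) =>0 'k) (exponent vectors are finitely
  supported functions nat =>0 nat) whose monomials only involve the variables 0..3.\<close>

type_synonym 'k mpoly = "(nat \<Rightarrow>\<^sub>0 nat) \<Rightarrow>\<^sub>0 'k"

definition alg_closed :: "'k::field itself \<Rightarrow> bool" where
  "alg_closed _ \<longleftrightarrow> (\<forall>p::'k poly. degree p \<ge> 1 \<longrightarrow> (\<exists>x. poly p x = 0))"

text \<open>Nontrivial non-Archimedean valuation, trivial on integers; v is only meaningful on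
  nonzero elements (v 0 plays the role of infinity and is never used).\<close>
definition nonarch_valuation :: "('k::field_char_0 \<Rightarrow> real) \<Rightarrow> bool" where
  "nonarch_valuation v \<longleftrightarrow>
     (\<forall>x y. x \<noteq> 0 \<longrightarrow> y \<noteq> 0 \<longrightarrow> v (x * y) = v x + v y) \<and>
     (\<forall>x y. x \<noteq> 0 \<longrightarrow> y \<noteq> 0 \<longrightarrow> x + y \<noteq> 0 \<longrightarrow> v (x + y) \<ge> min (v x) (v y)) \<and>
     (\<exists>x. x \<noteq> 0 \<and> v x \<noteq> 0) \<and>
     (\<forall>n::int. n \<noteq> 0 \<longrightarrow> v (of_int n) = 0)"

definition poly4 :: "'k::zero mpoly \<Rightarrow> bool" where
  "poly4 f \<longleftrightarrow> (\<forall>\<alpha>\<in>Poly_Mapping.keys f. Poly_Mapping.keys \<alpha> \<subseteq> {0..(3::nat)})"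

definition homogeneous_of_degree :: "nat \<Rightarrow> 'k::zero mpoly \<Rightarrow> bool" where
  "homogeneous_of_degree d f \<longleftrightarrow> (\<forall>\<alpha>\<in>Poly_Mapping.keys f. (\<Sum>i\<le>3. Poly_Mapping.lookup \<alpha> i) = d)"

definition involves_all_vars :: "'k::zero mpoly \<Rightarrow> bool" where
  "involves_all_vars f \<longleftrightarrow> (\<forall>i\<le>3. \<exists>\<alpha>\<in>Poly_Mapping.keys f. Poly_Mapping.lookup \<alpha> i > 0)"

definition eval4 :: "'k::comm_ring_1 mpoly \<Rightarrow> (nat \<Rightarrow> 'k) \<Rightarrow> 'k" where
  "eval4 f x = (\<Sum>\<alpha>\<in>Poly_Mapping.keys f. Poly_Mapping.lookup f \<alpha> * (\<Prod>j\<le>3. x j ^ Poly_Mapping.lookup \<alpha> j))"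

definition deval4 :: "nat \<Rightarrow> 'k::comm_ring_1 mpoly \<Rightarrow> (nat \<Rightarrow> 'k) \<Rightarrow> 'k" where
  "deval4 i f x = (\<Sum>\<alpha>\<in>Poly_Mapping.keys f. Poly_Mapping.lookup f \<alpha> * of_nat (Poly_Mapping.lookup \<alpha> i) *
        (\<Prod>j\<le>3. x j ^ (if j = i then Poly_Mapping.lookup \<alpha> j - 1 else Poly_Mapping.lookup \<alpha> j)))"

definition is_cone :: "'k::comm_ring_1 mpoly \<Rightarrow> bool" where
  "is_cone f \<longleftrightarrow> (\<exists>a::nat \<Rightarrow> 'k. (\<exists>i\<le>3. a i \<noteq> 0) \<and>
      (\<forall>x. eval4 f x = 0 \<longrightarrow> (\<forall>s t. eval4 f (\<lambda>i. s * x i + t * a i) = 0)))"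

definition Xtorus :: "'k::comm_ring_1 mpoly \<Rightarrow> (nat \<Rightarrow> 'k) set" where
  "Xtorus f = {x. x 0 = 1 \<and> x 1 \<noteq> 0 \<and> x 2 \<noteq> 0 \<and> x 3 \<noteq> 0 \<and> eval4 f x = 0}"

definition trop_pt :: "('k \<Rightarrow> real) \<Rightarrow> (nat \<Rightarrow> 'k) \<Rightarrow> real \<times> real \<times> real" where
  "trop_pt v x = (- v (x 1), - v (x 2), - v (x 3))"

definition tropX :: "('k::comm_ring_1 \<Rightarrow> real) \<Rightarrow> 'k mpoly \<Rightarrow> (real \<times> real \<times> real) set" where
  "tropX v f = closure (trop_pt v ` Xtorus f)"

text \<open>Tropical polynomial term of the monomial alpha at w (homogeneous coordinates (0,w)),
  and the initial set: monomials attaining the maximum.  These sets are exactly the cells of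
  the regular subdivision of the Newton polytope induced by the valuations.\<close>
definition trop_term :: "('k::zero \<Rightarrow> real) \<Rightarrow> 'k mpoly \<Rightarrow> real \<times> real \<times> real \<Rightarrow> (nat \<Rightarrow>\<^sub>0 nat) \<Rightarrow> real" where
  "trop_term v f w \<alpha> = - v (Poly_Mapping.lookup f \<alpha>) + real (Poly_Mapping.lookup \<alpha> 1) * fst w
      + real (Poly_Mapping.lookup \<alpha> 2) * fst (snd w) + real (Poly_Mapping.lookup \<alpha> 3) * snd (snd w)"

definition init_set :: "('k::zero \<Rightarrow> real) \<Rightarrow> 'k mpoly \<Rightarrow> real \<times> real \<times> real \<Rightarrow> (nat \<Rightarrow>\<^sub>0 nat) set" where
  "init_set v f w = {\<alpha>\<in>Poly_Mapping.keys f. trop_term v f w \<alpha> = Max (trop_term v f w ` Poly_Mapping.keys f)}"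

text \<open>Polyhedral structure on trop(X) dual to the regular subdivision: the cell dual to a
  subdivision cell S (with at least two points) is the closure of {w. init_set w = S}.\<close>
definition trop_cells :: "('k::zero \<Rightarrow> real) \<Rightarrow> 'k mpoly \<Rightarrow> (real \<times> real \<times> real) set set" where
  "trop_cells v f = {closure {w. init_set v f w = S} | S.
        {w. init_set v f w = S} \<noteq> {} \<and> card S \<ge> 2}"

text \<open>Lattice points of the Newton polytope: since f is homogeneous we project
  (a0,a1,a2,a3) to (a1,a2,a3), a lattice isomorphism of the hyperplane onto Z^3.\<close>
definition proj3 :: "(nat \<Rightarrow>\<^sub>0 nat) \<Rightarrow> real \<times> real \<times> real" where
  "proj3 \<alpha> = (real (Poly_Mapping.lookup \<alpha> 1), real (Poly_Mapping.lookup \<alpha> 2), real (Poly_Mapping.lookup \<alpha> 3))"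

definition int_point :: "real \<times> real \<times> real \<Rightarrow> bool" where
  "int_point z \<longleftrightarrow> fst z \<in> \<int> \<and> fst (snd z) \<in> \<int> \<and> snd (snd z) \<in> \<int>"

definition unimodular_simplex :: "(nat \<Rightarrow>\<^sub>0 nat) set \<Rightarrow> bool" where
  "unimodular_simplex S \<longleftrightarrow> inj_on proj3 S \<and> \<not> affine_dependent (proj3 ` S) \<and>
     (\<forall>\<beta>0\<in>S. \<forall>z. int_point z \<and> z \<in> span {proj3 \<beta> - proj3 \<beta>0 | \<beta>. \<beta> \<in> S} \<longrightarrow>
        (\<exists>c. (\<forall>\<beta>\<in>S. c \<beta> \<in> \<int>) \<and> z = (\<Sum>\<beta>\<in>S. c \<beta> *\<^sub>R (proj3 \<beta> - proj3 \<beta>0))))"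

text \<open>trop(X) smooth: the regular subdivision is a unimodular triangulation, i.e. every cell
  of the subdivision is a unimodular simplex all of whose marked points are vertices.\<close>
definition trop_smooth :: "('k::zero \<Rightarrow> real) \<Rightarrow> 'k mpoly \<Rightarrow> bool" where
  "trop_smooth v f \<longleftrightarrow> (\<forall>w. unimodular_simplex (init_set v f w))"

definition lin_span_cell :: "(real \<times> real \<times> real) set \<Rightarrow> (real \<times> real \<times> real) set" where
  "lin_span_cell F = span {x - y | x y. x \<in> F \<and> y \<in> F}"

definition std_e :: "nat \<Rightarrow> real \<times> real \<times> real" where
  "std_e i = (if i = 1 then (1,0,0) else if i = 2 then (0,1,0) else if i = 3 then (0,0,1)
              else (-1,-1,-1))"

text \<open>Tropical tangent at p: tropicalization of the tangent plane [df/dx0 : ... : df/dx3]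
  at a smooth point x of X in the torus with trop x = p, the tangent plane lying in the dual
  torus (all partial derivatives nonzero); dual torus coordinates y_i / y_0.\<close>
definition tropical_tangent :: "('k::field \<Rightarrow> real) \<Rightarrow> 'k mpoly \<Rightarrow> real \<times> real \<times> real
    \<Rightarrow> real \<times> real \<times> real \<Rightarrow> bool" where
  "tropical_tangent v f p q \<longleftrightarrow> (\<exists>x\<in>Xtorus f. trop_pt v x = p \<and>
      (\<exists>i\<le>3. deval4 i f x \<noteq> 0) \<and> (\<forall>i\<le>3. deval4 i f x \<noteq> 0) \<and>
      q = (- v (deval4 1 f x / deval4 0 f x), - v (deval4 2 f x / deval4 0 f x),
           - v (deval4 3 f x / deval4 0 f x)))"

end

theory Submission
  imports Defs
begin


definition bigv :: "('k::field_char_0 \<Rightarrow> real) \<Rightarrow> real \<Rightarrow> 'k \<Rightarrow> bool" where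
  "bigv v m y \<longleftrightarrow> y = 0 \<or> m < v y"

context fixes v :: "'k::field_char_0 \<Rightarrow> real" assumes V: "nonarch_valuation v"
begin

lemma v_mult: "x \<noteq> 0 \<Longrightarrow> y \<noteq> 0 \<Longrightarrow> v (x * y) = v x + v y"
  using V unfolding nonarch_valuation_def by blast
lemma v_add: "x \<noteq> 0 \<Longrightarrow> y \<noteq> 0 \<Longrightarrow> x + y \<noteq> 0 \<Longrightarrow> v (x + y) \<ge> min (v x) (v y)"
  using V unfolding nonarch_valuation_def by blast
lemma v_int: "n \<noteq> 0 \<Longrightarrow> v (of_int n) = 0"
  using V unfolding nonarch_valuation_def by blast
lemma v_one: "v 1 = 0" using v_int[of 1] by simp
lemma v_nat: "n \<noteq> 0 \<Longrightarrow> v (of_nat n) = 0" using v_int[of "int n"] by simp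
lemma v_neg: "y \<noteq> 0 \<Longrightarrow> v (- y) = v y"
  using v_mult[of "-1" y] v_int[of "-1"] by simp
lemma v_pow: "x \<noteq> 0 \<Longrightarrow> v (x ^ n) = real n * v x"
  by (induction n) (auto simp: v_one v_mult algebra_simps)
lemma v_div: "x \<noteq> 0 \<Longrightarrow> y \<noteq> 0 \<Longrightarrow> v (x / y) = v x - v y"
  using v_mult[of "x / y" y] by simp

lemma bigv_add: "bigv v m a \<Longrightarrow> bigv v m b \<Longrightarrow> bigv v m (a + b)"
  unfolding bigv_def using v_add[of a b] by force
lemma bigv_neg: "bigv v m a \<Longrightarrow> bigv v m (- a)"
  unfolding bigv_def using v_neg by force
lemma bigv_nat: "bigv v m a \<Longrightarrow> bigv v m (of_nat n * a)"
  unfolding bigv_def using v_mult[of "of_nat n" a] v_nat[of n] by force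
lemma bigv_sum: "finite A \<Longrightarrow> (\<And>a. a \<in> A \<Longrightarrow> bigv v m (g a)) \<Longrightarrow> bigv v m (sum g A)"
  by (induction A rule: finite_induct) (auto simp: bigv_add, simp add: bigv_def)
lemma dominant: assumes "z \<noteq> 0" "v z = m" "bigv v m y"
  shows "z + y \<noteq> 0 \<and> v (z + y) = m"
proof (cases "y = 0")
  case True then show ?thesis using assms by simp
next
  case False
  then have y: "m < v y" using assms(3) bigv_def by blast
  have nz: "z + y \<noteq> 0"
  proof
    assume "z + y = 0" then have "z = - y" by (simp add: eq_neg_iff_add_eq_0)
    then show False using y assms v_neg[OF False] by simp
  qed
  have ge: "v (z + y) \<ge> m" using v_add[OF assms(1) False nz] y assms(2) by simp
  have "v z \<ge> min (v (z + y)) (v (- y))"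
    using v_add[of "z + y" "- y"] nz False assms(1) by simp
  then have "v (z + y) \<le> m" using y assms(2) v_neg[OF False] by (auto simp: min_def split: if_splits)
  then show ?thesis using nz ge by simp
qed

end


lemma atMost3: "{..3::nat} = {0,1,2,3}" by auto
lemma prod4: "(\<Prod>j\<le>(3::nat). g j) = g 0 * g 1 * g 2 * g 3"
  by (simp add: atMost3 mult_ac)
lemma sum4: "(\<Sum>j\<le>(3::nat). g j) = g 0 + g 1 + g 2 + g 3"
  by (simp add: atMost3 add_ac)

definition mon :: "(nat \<Rightarrow> 'k::comm_ring_1) \<Rightarrow> (nat \<Rightarrow>\<^sub>0 nat) \<Rightarrow> 'k" where
  "mon x a = (\<Prod>j\<le>3. x j ^ Poly_Mapping.lookup a j)"

lemma pow_pred: "0 < k \<Longrightarrow> (a::'a::monoid_mult) * a ^ (k - 1) = a ^ k"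
  by (cases k) auto

lemma deriv_term:
  fixes x :: "nat \<Rightarrow> 'k::comm_ring_1"
  assumes "i \<le> 3"
  shows "x i * (c * of_nat (Poly_Mapping.lookup a i) *
        (\<Prod>j\<le>3. x j ^ (if j = i then Poly_Mapping.lookup a j - 1 else Poly_Mapping.lookup a j)))
      = of_nat (Poly_Mapping.lookup a i) * (c * mon x a)"
proof (cases "Poly_Mapping.lookup a i = 0")
  case True then show ?thesis by simp
next
  case False
  then have k: "0 < Poly_Mapping.lookup a i" by simp
  have i: "i \<in> {..3}" using assms by simp
  have e1: "(\<Prod>j\<le>3. x j ^ (if j = i then Poly_Mapping.lookup a j - 1 else Poly_Mapping.lookup a j))
     = x i ^ (Poly_Mapping.lookup a i - 1) * (\<Prod>j\<in>{..3} - {i}. x j ^ Poly_Mapping.lookup a j)"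
    by (subst prod.remove[OF _ i]) auto
  have e2: "mon x a = x i ^ (Poly_Mapping.lookup a i) * (\<Prod>j\<in>{..3} - {i}. x j ^ Poly_Mapping.lookup a j)"
    unfolding mon_def by (subst prod.remove[OF _ i]) auto
  show ?thesis unfolding e1 e2 pow_pred[OF k, symmetric] by (simp add: algebra_simps)
qed

lemma deriv_sum:
  fixes x :: "nat \<Rightarrow> 'k::comm_ring_1"
  assumes "i \<le> 3"
  shows "x i * deval4 i f x = (\<Sum>a\<in>Poly_Mapping.keys f.
            of_nat (Poly_Mapping.lookup a i) * (Poly_Mapping.lookup f a * mon x a))"
  unfolding deval4_def sum_distrib_left by (rule sum.cong) (simp_all add: deriv_term[OF assms])

lemma eval_mon: "eval4 f x = (\<Sum>a\<in>Poly_Mapping.keys f. Poly_Mapping.lookup f a * mon x a)"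
  unfolding eval4_def mon_def by simp

context fixes v :: "'k::field_char_0 \<Rightarrow> real" assumes V: "nonarch_valuation v"
begin

lemma mon_nz: fixes x :: "nat \<Rightarrow> 'k" assumes "x \<in> Xtorus f" shows "mon x a \<noteq> 0"
proof -
  have x: "x 0 = 1" "x 1 \<noteq> 0" "x 2 \<noteq> 0" "x 3 \<noteq> 0" using assms unfolding Xtorus_def by auto
  show ?thesis unfolding mon_def prod4 using x by simp
qed

lemma v_mon: assumes "x \<in> Xtorus f"
  shows "v (mon x a) = real (Poly_Mapping.lookup a 1) * v (x 1) + real (Poly_Mapping.lookup a 2) * v (x 2)
     + real (Poly_Mapping.lookup a 3) * v (x 3)"
proof -
  have x: "x 0 = 1" "x 1 \<noteq> 0" "x 2 \<noteq> 0" "x 3 \<noteq> 0" using assms unfolding Xtorus_def by auto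
  show ?thesis unfolding mon_def prod4
    using x by (simp add: v_mult[OF V] v_pow[OF V] v_one[OF V])
qed

lemma v_term: assumes "x \<in> Xtorus f" "a \<in> Poly_Mapping.keys f"
  shows "- v (Poly_Mapping.lookup f a * mon x a) = trop_term v f (trop_pt v x) a"
proof -
  have c: "Poly_Mapping.lookup f a \<noteq> 0" using assms(2) by (simp add: in_keys_iff)
  then show ?thesis
    using v_mult[OF V c mon_nz[OF assms(1)]] v_mon[OF assms(1)]
    by (simp add: trop_term_def trop_pt_def algebra_simps)
qed

end


lemma sum_split2: assumes "finite K" "a \<in> K" "b \<in> K" "a \<noteq> b"
  shows "sum h K = h a + h b + sum h (K - {a, b})"
proof -
  have "sum h K = h a + sum h (K - {a})" using assms by (simp add: sum.remove)
  also have "sum h (K - {a}) = h b + sum h (K - {a} - {b})" using assms by (simp add: sum.remove)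
  also have "K - {a} - {b} = K - {a, b}" by auto
  finally show ?thesis by (simp add: add_ac)
qed

lemma core:
  fixes v :: "'k::field_char_0 \<Rightarrow> real" and x :: "nat \<Rightarrow> 'k" and f :: "'k mpoly"
  assumes V: "nonarch_valuation v" and x: "x \<in> Xtorus f"
    and ka: "\<alpha> \<in> Poly_Mapping.keys f" and kb: "\<beta> \<in> Poly_Mapping.keys f" and ab: "\<alpha> \<noteq> \<beta>"
    and eq: "trop_term v f (trop_pt v x) \<alpha> = trop_term v f (trop_pt v x) \<beta>"
    and lt: "\<forall>\<gamma>\<in>Poly_Mapping.keys f - {\<alpha>, \<beta>}. trop_term v f (trop_pt v x) \<gamma> < trop_term v f (trop_pt v x) \<alpha>"
    and i: "i \<le> 3" and diff: "Poly_Mapping.lookup \<alpha> i \<noteq> Poly_Mapping.lookup \<beta> i"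
  shows "deval4 i f x \<noteq> 0 \<and> v (deval4 i f x) = v (Poly_Mapping.lookup f \<alpha> * mon x \<alpha>) - v (x i)"
proof -
  define t where "t \<gamma> = Poly_Mapping.lookup f \<gamma> * mon x \<gamma>" for \<gamma>
  define m where "m = v (t \<alpha>)"
  define K where "K = Poly_Mapping.keys f"
  have fin: "finite K" unfolding K_def by simp
  have tnz: "\<gamma> \<in> K \<Longrightarrow> t \<gamma> \<noteq> 0" for \<gamma>
    unfolding t_def K_def using mon_nz[OF V x] by (simp add: in_keys_iff)
  have vt: "\<gamma> \<in> K \<Longrightarrow> - v (t \<gamma>) = trop_term v f (trop_pt v x) \<gamma>" for \<gamma>
    unfolding t_def K_def using v_term[OF V x] by simp
  have vb: "v (t \<beta>) = m" unfolding m_def using vt[of \<alpha>] vt[of \<beta>] ka kb eq K_def by simp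
  have big: "bigv v m (t \<gamma>)" if g: "\<gamma> \<in> K - {\<alpha>, \<beta>}" for \<gamma>
  proof -
    have "trop_term v f (trop_pt v x) \<gamma> < trop_term v f (trop_pt v x) \<alpha>" using lt g K_def by blast
    moreover have "- v (t \<alpha>) = trop_term v f (trop_pt v x) \<alpha>" using vt ka K_def by blast
    moreover have "- v (t \<gamma>) = trop_term v f (trop_pt v x) \<gamma>" using vt g by blast
    ultimately show ?thesis unfolding bigv_def m_def by linarith
  qed
  define R where "R = sum t (K - {\<alpha>, \<beta>})"
  have bR: "bigv v m R" unfolding R_def by (rule bigv_sum[OF V]) (use fin big in auto)
  have "eval4 f x = 0" using x unfolding Xtorus_def by simp
  then have "t \<alpha> + t \<beta> + R = 0"
    unfolding eval_mon R_def using sum_split2[OF fin, of \<alpha> \<beta> t] ka kb ab K_def t_def by simp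
  then have tb: "t \<beta> = - t \<alpha> - R" by (simp add: algebra_simps eq_neg_iff_add_eq_0)
  define a where "a = Poly_Mapping.lookup \<alpha> i"
  define b where "b = Poly_Mapping.lookup \<beta> i"
  define Ri where "Ri = (\<Sum>\<gamma>\<in>K - {\<alpha>, \<beta>}. of_nat (Poly_Mapping.lookup \<gamma> i) * t \<gamma>)"
  have bRi: "bigv v m Ri" unfolding Ri_def
    by (rule bigv_sum[OF V]) (use fin big bigv_nat[OF V] in auto)
  have "x i * deval4 i f x = of_nat a * t \<alpha> + of_nat b * t \<beta> + Ri"
    unfolding deriv_sum[OF i] Ri_def a_def b_def
    using sum_split2[OF fin, of \<alpha> \<beta> "\<lambda>\<gamma>. of_nat (Poly_Mapping.lookup \<gamma> i) * t \<gamma>"] ka kb ab K_def t_def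
    by simp
  also have "\<dots> = of_int (int a - int b) * t \<alpha> + (of_nat b * (- R) + Ri)"
    unfolding tb by (simp add: algebra_simps)
  finally have xd: "x i * deval4 i f x = of_int (int a - int b) * t \<alpha> + (of_nat b * (- R) + Ri)" .
  have ab': "int a - int b \<noteq> 0" using diff a_def b_def by simp
  have z: "of_int (int a - int b) * t \<alpha> \<noteq> 0" "v (of_int (int a - int b) * t \<alpha>) = m"
    using ab' tnz[of \<alpha>] ka K_def v_mult[OF V, of "of_int (int a - int b)" "t \<alpha>"] v_int[OF V ab'] m_def
    by auto
  have bb: "bigv v m (of_nat b * (- R) + Ri)"
    by (rule bigv_add[OF V bigv_nat[OF V bigv_neg[OF V bR]] bRi])
  from dominant[OF V z bb] xd have d: "x i * deval4 i f x \<noteq> 0" "v (x i * deval4 i f x) = m" by auto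
  have "i = 0 \<or> i = 1 \<or> i = 2 \<or> i = 3" using i by auto
  then have xi: "x i \<noteq> 0" using x unfolding Xtorus_def by auto
  have dn: "deval4 i f x \<noteq> 0" using d by auto
  show ?thesis using d v_mult[OF V xi dn] dn unfolding m_def t_def by simp
qed



lemma tt_inner: "trop_term v f w \<gamma> = - v (Poly_Mapping.lookup f \<gamma>) + proj3 \<gamma> \<bullet> w"
  by (cases w) (simp add: trop_term_def proj3_def inner_prod_def)

lemma init_iff: "\<gamma> \<in> init_set v f w \<longleftrightarrow> \<gamma> \<in> Poly_Mapping.keys f \<and>
    (\<forall>\<delta>\<in>Poly_Mapping.keys f. trop_term v f w \<delta> \<le> trop_term v f w \<gamma>)"
proof
  assume g: "\<gamma> \<in> init_set v f w"
  then show "\<gamma> \<in> Poly_Mapping.keys f \<and> (\<forall>\<delta>\<in>Poly_Mapping.keys f. trop_term v f w \<delta> \<le> trop_term v f w \<gamma>)"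
    unfolding init_set_def by (auto intro: Max_ge)
next
  assume g: "\<gamma> \<in> Poly_Mapping.keys f \<and> (\<forall>\<delta>\<in>Poly_Mapping.keys f. trop_term v f w \<delta> \<le> trop_term v f w \<gamma>)"
  then have "Max (trop_term v f w ` Poly_Mapping.keys f) = trop_term v f w \<gamma>"
    by (intro Max_eqI) auto
  then show "\<gamma> \<in> init_set v f w" using g unfolding init_set_def by auto
qed

lemma cl_le: "closed {w. trop_term v f w \<delta> \<le> trop_term v f w \<alpha>}"
proof -
  have "{w. trop_term v f w \<delta> \<le> trop_term v f w \<alpha>} =
     {w. (proj3 \<delta> - proj3 \<alpha>) \<bullet> w \<le> v (Poly_Mapping.lookup f \<delta>) - v (Poly_Mapping.lookup f \<alpha>)}"
    unfolding tt_inner by (auto simp: inner_diff_left)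
  then show ?thesis by (simp only:) (rule closed_halfspace_le)
qed

lemma tt_affine: "trop_term v f ((1 + t) *\<^sub>R p + (- t) *\<^sub>R c) \<delta> =
   (1 + t) * trop_term v f p \<delta> - t * trop_term v f c \<delta>"
  unfolding tt_inner by (simp add: inner_add_right algebra_simps)

lemma hyper_incl:
  fixes u w :: "real \<times> real \<times> real"
  assumes u: "u \<noteq> 0" and inc: "\<And>z. u \<bullet> z = 0 \<Longrightarrow> w \<bullet> z = 0"
  shows "\<exists>c. w = c *\<^sub>R u"
proof -
  obtain u1 u2 u3 where U: "u = (u1, u2, u3)" by (cases u) auto
  obtain w1 w2 w3 where W: "w = (w1, w2, w3)" by (cases w) auto
  have e1: "w1 * u2 = w2 * u1" using inc[of "(u2, - u1, 0)"] by (simp add: U W inner_prod_def algebra_simps)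
  have e2: "w1 * u3 = w3 * u1" using inc[of "(u3, 0, - u1)"] by (simp add: U W inner_prod_def algebra_simps)
  have e3: "w2 * u3 = w3 * u2" using inc[of "(0, u3, - u2)"] by (simp add: U W inner_prod_def algebra_simps)
  show ?thesis
  proof (cases "u1 = 0")
    case False
    show ?thesis by (rule exI[of _ "w1 / u1"]) (use False e1 e2 in \<open>simp add: U W field_simps\<close>)
  next
    case u1: True
    show ?thesis
    proof (cases "u2 = 0")
      case False
      show ?thesis by (rule exI[of _ "w2 / u2"]) (use False u1 e1 e3 in \<open>simp add: U W field_simps\<close>)
    next
      case u2: True
      then have "u3 \<noteq> 0" using u u1 U by (auto simp: zero_prod_def)
      then show ?thesis by (intro exI[of _ "w3 / u3"]) (use u1 u2 e2 e3 in \<open>simp add: U W field_simps\<close>)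
    qed
  qed
qed



lemma two_elems: "finite S \<Longrightarrow> card S \<ge> 2 \<Longrightarrow> \<exists>a b. a \<in> S \<and> b \<in> S \<and> a \<noteq> b"
proof -
  assume f: "finite S" and c: "card S \<ge> 2"
  then obtain a where a: "a \<in> S" by fastforce
  have "card (S - {a}) \<ge> 1" using f c a by simp
  then have "S - {a} \<noteq> {}" by (metis card.empty not_one_le_zero)
  then obtain b where "b \<in> S - {a}" by blast
  then show ?thesis using a by blast
qed

lemma init_le: "\<gamma> \<in> init_set v f w \<Longrightarrow> \<delta> \<in> Poly_Mapping.keys f \<Longrightarrow> trop_term v f w \<delta> \<le> trop_term v f w \<gamma>"
  using init_iff by blast

lemma geo:
  fixes v :: "'k::field_char_0 \<Rightarrow> real" and f :: "'k mpoly"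
  assumes hom: "homogeneous_of_degree d f"
    and sm: "trop_smooth v f"
    and FC: "F \<in> trop_cells v f" and ad: "aff_dim F = 2"
    and ne: "\<forall>i\<le>3. std_e i \<notin> lin_span_cell F"
    and pr: "p \<in> rel_interior F"
  shows "\<exists>\<alpha> \<beta>. \<alpha> \<in> Poly_Mapping.keys f \<and> \<beta> \<in> Poly_Mapping.keys f \<and> \<alpha> \<noteq> \<beta> \<and>
     trop_term v f p \<alpha> = trop_term v f p \<beta> \<and>
     (\<forall>\<gamma>\<in>Poly_Mapping.keys f - {\<alpha>, \<beta>}. trop_term v f p \<gamma> < trop_term v f p \<alpha>) \<and>
     (\<forall>i\<le>3. Poly_Mapping.lookup \<alpha> i \<noteq> Poly_Mapping.lookup \<beta> i)"
proof -
  define K where "K = Poly_Mapping.keys f"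
  let ?tt = "trop_term v f"
  obtain S where FS: "F = closure {w. init_set v f w = S}" and Cne: "{w. init_set v f w = S} \<noteq> {}"
    and cS: "card S \<ge> 2"
    using FC unfolding trop_cells_def by blast
  define C where "C = {w. init_set v f w = S}"
  obtain c where c: "c \<in> C" using Cne C_def by blast
  have cinit: "init_set v f c = S" using c C_def by simp
  have uni: "unimodular_simplex S" using sm cinit unfolding trop_smooth_def by metis
  have SK: "S \<subseteq> K" using cinit unfolding init_set_def K_def by auto
  have finS: "finite S" using cS by (metis card.infinite not_numeral_le_zero)
  have pF: "p \<in> F" using pr rel_interior_subset by blast
  have FC': "F = closure C" using FS C_def by simp
  have cF: "c \<in> F" unfolding FC' using c closure_subset[of C] by (rule subsetD[rotated])
  have le: "\<forall>w\<in>F. ?tt w \<delta> \<le> ?tt w \<alpha>" if a: "\<alpha> \<in> S" and d: "\<delta> \<in> K" for \<alpha> \<delta>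
  proof -
    have "C \<subseteq> {w. ?tt w \<delta> \<le> ?tt w \<alpha>}" using a d unfolding C_def K_def by (auto simp: init_iff)
    then have "F \<subseteq> {w. ?tt w \<delta> \<le> ?tt w \<alpha>}" unfolding FC'
      by (rule closure_minimal) (rule cl_le)
    then show ?thesis by blast
  qed
  have eqF: "\<forall>w\<in>F. ?tt w \<alpha> = ?tt w \<beta>" if "\<alpha> \<in> S" "\<beta> \<in> S" for \<alpha> \<beta>
    using le[of \<alpha> \<beta>] le[of \<beta> \<alpha>] that SK by force
  have ST: "S \<subseteq> init_set v f p"
    using le pF SK unfolding K_def by (auto simp: init_iff)
  have TS: "init_set v f p \<subseteq> S"
  proof
    fix \<gamma> assume g: "\<gamma> \<in> init_set v f p"
    show "\<gamma> \<in> S"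
    proof (rule ccontr)
      assume gS: "\<gamma> \<notin> S"
      obtain \<alpha> where a: "\<alpha> \<in> S" using cS finS two_elems by blast
      have gK: "\<gamma> \<in> K" using g unfolding init_set_def K_def by auto
      have gp: "?tt p \<gamma> = ?tt p \<alpha>"
        using le[OF a gK] pF init_le[OF g, of \<alpha>] a SK K_def by force
      have "\<gamma> \<notin> init_set v f c" using gS cinit by simp
      then have "\<not> (\<forall>\<delta>\<in>K. ?tt c \<delta> \<le> ?tt c \<gamma>)" using gK init_iff K_def by blast
      then obtain \<delta> where dK: "\<delta> \<in> K" and gd: "?tt c \<gamma> < ?tt c \<delta>"
        by (auto simp: not_le)
      have "?tt c \<delta> \<le> ?tt c \<alpha>" using a dK cinit init_le[of \<alpha> v f c \<delta>] K_def by simp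
      with gd have gc: "?tt c \<gamma> < ?tt c \<alpha>" by simp
      obtain e where e: "e > 0" and be: "ball p e \<inter> affine hull F \<subseteq> F"
        using pr unfolding mem_rel_interior_ball by blast
      define t where "t = e / (2 * (norm (c - p) + 1))"
      have np: "0 < 2 * (norm (c - p) + 1)" by (smt (verit) norm_ge_zero)
      have t: "t > 0" unfolding t_def using e np by (rule divide_pos_pos)
      define z where "z = (1 + t) *\<^sub>R p + (- t) *\<^sub>R c"
      have zA: "z \<in> affine hull F" unfolding z_def
        by (rule mem_affine[OF affine_affine_hull]) (use pF cF hull_inc in auto)
      have "p - z = t *\<^sub>R (c - p)" unfolding z_def by (simp add: algebra_simps)
      then have "dist p z = t * norm (c - p)" using t by (simp add: dist_norm)
      also have "\<dots> < e"
      proof -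
        have "t * norm (c - p) = e * (norm (c - p) / (2 * (norm (c - p) + 1)))" unfolding t_def by simp
        also have "norm (c - p) / (2 * (norm (c - p) + 1)) < 1"
          using np by (simp add: divide_less_eq)
        finally show ?thesis using e by (simp add: mult_less_cancel_left1)
      qed
      finally have "z \<in> F" using zA be by auto
      then have "?tt z \<gamma> \<le> ?tt z \<alpha>" using le[OF a gK] by blast
      moreover have "?tt z \<gamma> - ?tt z \<alpha> = t * (?tt c \<alpha> - ?tt c \<gamma>)"
        unfolding z_def tt_affine gp by (simp add: algebra_simps)
      ultimately show False using t gc by (smt (verit) mult_pos_pos)
    qed
  qed
  have initp: "init_set v f p = S" using ST TS by blast
  let ?L = "lin_span_cell F"
  have LH: "?L \<subseteq> {z. (proj3 \<alpha> - proj3 \<beta>) \<bullet> z = 0}" if "\<alpha> \<in> S" "\<beta> \<in> S" for \<alpha> \<beta>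
    unfolding lin_span_cell_def
  proof (rule span_minimal[OF _ subspace_hyperplane])
    show "{x - y |x y. x \<in> F \<and> y \<in> F} \<subseteq> {z. (proj3 \<alpha> - proj3 \<beta>) \<bullet> z = 0}"
    proof
      fix z assume "z \<in> {x - y |x y. x \<in> F \<and> y \<in> F}"
      then obtain x y where z: "z = x - y" "x \<in> F" "y \<in> F" by blast
      then have "?tt x \<alpha> = ?tt x \<beta>" "?tt y \<alpha> = ?tt y \<beta>" using eqF[OF that] by auto
      then have "(proj3 \<alpha> - proj3 \<beta>) \<bullet> (x - y) = 0"
        unfolding tt_inner by (simp add: inner_diff_left inner_diff_right algebra_simps)
      then show "z \<in> {z. (proj3 \<alpha> - proj3 \<beta>) \<bullet> z = 0}" using z by simp
    qed
  qed
  have dimL: "dim ?L = 2"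
  proof -
    have "p \<in> affine hull F" by (rule hull_inc[OF pF])
    from aff_dim_eq_dim[OF this] have "int (dim ((+) (- p) ` F)) = 2" unfolding ad by simp
    then have d2: "dim ((+) (- p) ` F) = 2" by linarith
    have "span {x - y |x y. x \<in> F \<and> y \<in> F} = span ((+) (- p) ` F)"
      unfolding span_eq
    proof
      show "{x - y |x y. x \<in> F \<and> y \<in> F} \<subseteq> span ((+) (- p) ` F)"
      proof
        fix z assume "z \<in> {x - y |x y. x \<in> F \<and> y \<in> F}"
        then obtain x y where z: "z = x - y" "x \<in> F" "y \<in> F" by blast
        then have "(- p + x) - (- p + y) \<in> span ((+) (- p) ` F)"
          by (intro span_diff span_base imageI z(2,3))
        then show "z \<in> span ((+) (- p) ` F)" using z by simp
      qed
      show "(+) (- p) ` F \<subseteq> span {x - y |x y. x \<in> F \<and> y \<in> F}"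
      proof
        fix z assume "z \<in> (+) (- p) ` F"
        then obtain x where z: "z = - p + x" "x \<in> F" by blast
        then have "x - p \<in> {x - y |x y. x \<in> F \<and> y \<in> F}" using pF by blast
        then show "z \<in> span {x - y |x y. x \<in> F \<and> y \<in> F}" using span_superset z by force
      qed
    qed
    then show ?thesis unfolding lin_span_cell_def using d2 by (metis dim_span span_eq_dim)
  qed
  have HL: "{z. (proj3 \<alpha> - proj3 \<beta>) \<bullet> z = 0} \<subseteq> ?L" if ab: "\<alpha> \<in> S" "\<beta> \<in> S" "\<alpha> \<noteq> \<beta>" for \<alpha> \<beta>
  proof -
    have "proj3 \<alpha> \<noteq> proj3 \<beta>" using uni ab unfolding unimodular_simplex_def inj_on_def by blast
    then have "dim {z. (proj3 \<alpha> - proj3 \<beta>) \<bullet> z = 0} = 2" by (simp add: dim_hyperplane)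
    then have "span ?L = span {z. (proj3 \<alpha> - proj3 \<beta>) \<bullet> z = 0}"
      using dim_eq_span[OF LH[OF ab(1,2)]] dimL by simp
    then show ?thesis unfolding lin_span_cell_def by (simp add: span_span span_superset)
  qed
  obtain \<alpha> \<beta> where a: "\<alpha> \<in> S" and b: "\<beta> \<in> S" and ab: "\<alpha> \<noteq> \<beta>" using two_elems[OF finS cS] by blast
  have S2: "S \<subseteq> {\<alpha>, \<beta>}"
  proof
    fix \<gamma> assume g: "\<gamma> \<in> S"
    show "\<gamma> \<in> {\<alpha>, \<beta>}"
    proof (rule ccontr)
      assume "\<gamma> \<notin> {\<alpha>, \<beta>}"
      then have ga: "\<gamma> \<noteq> \<alpha>" "\<gamma> \<noteq> \<beta>" by auto
      have inj: "inj_on proj3 S" using uni unfolding unimodular_simplex_def by blast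
      have d1: "proj3 \<alpha> \<noteq> proj3 \<beta>" "proj3 \<gamma> \<noteq> proj3 \<alpha>" "proj3 \<gamma> \<noteq> proj3 \<beta>"
        using inj a b g ab ga unfolding inj_on_def by metis+
      have "proj3 \<alpha> - proj3 \<beta> \<noteq> 0" using d1 by simp
      moreover have "\<And>z. (proj3 \<alpha> - proj3 \<beta>) \<bullet> z = 0 \<Longrightarrow> (proj3 \<alpha> - proj3 \<gamma>) \<bullet> z = 0"
        using HL[OF a b ab] LH[OF a g] by blast
      ultimately obtain k where k: "proj3 \<alpha> - proj3 \<gamma> = k *\<^sub>R (proj3 \<alpha> - proj3 \<beta>)"
        using hyper_incl by blast
      have "proj3 \<gamma> - proj3 \<beta> = (1 - k) *\<^sub>R (proj3 \<alpha> - proj3 \<beta>)"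
        using k by (simp add: algebra_simps)
      then have "collinear {0, proj3 \<alpha> - proj3 \<beta>, proj3 \<gamma> - proj3 \<beta>}"
        unfolding collinear_lemma by blast
      then have "collinear {proj3 \<alpha>, proj3 \<beta>, proj3 \<gamma>}" by (subst collinear_3) auto
      then have "affine_dependent {proj3 \<alpha>, proj3 \<beta>, proj3 \<gamma>}"
        using collinear_3_eq_affine_dependent d1 by metis
      then have "affine_dependent (proj3 ` S)"
        by (rule affine_dependent_subset) (use a b g in auto)
      then show False using uni unfolding unimodular_simplex_def by blast
    qed
  qed
  have pa: "\<alpha> \<in> init_set v f p" and pb: "\<beta> \<in> init_set v f p" using initp a b by auto
  have aK: "\<alpha> \<in> K" and bK: "\<beta> \<in> K" using a b SK by auto
  have eqp: "?tt p \<alpha> = ?tt p \<beta>" using init_le[OF pa, of \<beta>] init_le[OF pb, of \<alpha>] aK bK K_def by force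
  have ltp: "\<forall>\<gamma>\<in>K - {\<alpha>, \<beta>}. ?tt p \<gamma> < ?tt p \<alpha>"
  proof
    fix \<gamma> assume g: "\<gamma> \<in> K - {\<alpha>, \<beta>}"
    then have "\<gamma> \<notin> init_set v f p" using initp S2 by auto
    then have "\<not> (\<forall>\<delta>\<in>K. ?tt p \<delta> \<le> ?tt p \<gamma>)" using g init_iff K_def by blast
    then obtain \<delta> where "\<delta> \<in> K" "?tt p \<gamma> < ?tt p \<delta>" by (auto simp: not_le)
    moreover have "?tt p \<delta> \<le> ?tt p \<alpha>" using init_le[OF pa] calculation(1) K_def by auto
    ultimately show "?tt p \<gamma> < ?tt p \<alpha>" by simp
  qed
  have dif: "\<forall>i\<le>3. Poly_Mapping.lookup \<alpha> i \<noteq> Poly_Mapping.lookup \<beta> i"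
  proof (intro allI impI notI)
    fix i :: nat assume i: "i \<le> 3" and eqi: "Poly_Mapping.lookup \<alpha> i = Poly_Mapping.lookup \<beta> i"
    have "std_e i \<in> {z. (proj3 \<alpha> - proj3 \<beta>) \<bullet> z = 0}"
    proof -
      have "i = 0 \<or> i = 1 \<or> i = 2 \<or> i = 3" using i by auto
      then show ?thesis
      proof (elim disjE)
        assume i0: "i = 0"
        have "(\<Sum>j\<le>3. Poly_Mapping.lookup \<alpha> j) = d" "(\<Sum>j\<le>3. Poly_Mapping.lookup \<beta> j) = d"
          using hom aK bK unfolding homogeneous_of_degree_def K_def by auto
        then have "Poly_Mapping.lookup \<alpha> 1 + Poly_Mapping.lookup \<alpha> 2 + Poly_Mapping.lookup \<alpha> 3 =
            Poly_Mapping.lookup \<beta> 1 + Poly_Mapping.lookup \<beta> 2 + Poly_Mapping.lookup \<beta> 3"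
          using eqi i0 unfolding sum4 by simp
        then have "real (Poly_Mapping.lookup \<alpha> 1) + real (Poly_Mapping.lookup \<alpha> 2) + real (Poly_Mapping.lookup \<alpha> 3) =
            real (Poly_Mapping.lookup \<beta> 1) + real (Poly_Mapping.lookup \<beta> 2) + real (Poly_Mapping.lookup \<beta> 3)"
          by (metis of_nat_add)
        then show ?thesis using i0 by (simp add: std_e_def proj3_def inner_prod_def algebra_simps)
      qed (use eqi in \<open>simp_all add: std_e_def proj3_def inner_prod_def\<close>)
    qed
    then have "std_e i \<in> ?L" using HL[OF a b ab] by blast
    then show False using ne i by blast
  qed
  show ?thesis using aK bK ab eqp ltp dif unfolding K_def by blast
qed


theorem proposition1p10:
  fixes v :: "'k::field_char_0 \<Rightarrow> real" and f :: "'k mpoly" and d :: nat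
    and F :: "(real \<times> real \<times> real) set" and p :: "real \<times> real \<times> real"
  assumes "alg_closed TYPE('k)"
    and "nonarch_valuation v"
    and "poly4 f" and "homogeneous_of_degree d f" and "involves_all_vars f"
    and "irreducible f"
    and "d \<ge> 2"
    and "\<not> is_cone f"
    and "trop_smooth v f"
    and "F \<in> trop_cells v f" and "aff_dim F = 2"
    and "\<forall>i\<le>3. std_e i \<notin> lin_span_cell F"
    and "p \<in> rel_interior F"
  shows "\<forall>q. tropical_tangent v f p q \<longrightarrow> q = - p"
proof (intro allI impI)
  fix q assume tt: "tropical_tangent v f p q"
  have V: "nonarch_valuation v" by fact
  obtain \<alpha> \<beta> where ka: "\<alpha> \<in> Poly_Mapping.keys f" and kb: "\<beta> \<in> Poly_Mapping.keys f" and ab: "\<alpha> \<noteq> \<beta>"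
    and eq: "trop_term v f p \<alpha> = trop_term v f p \<beta>"
    and lt: "\<forall>\<gamma>\<in>Poly_Mapping.keys f - {\<alpha>, \<beta>}. trop_term v f p \<gamma> < trop_term v f p \<alpha>"
    and dif: "\<forall>i\<le>3. Poly_Mapping.lookup \<alpha> i \<noteq> Poly_Mapping.lookup \<beta> i"
    using geo[OF assms(4) assms(9) assms(10) assms(11) assms(12) assms(13)] by blast
  obtain x where x: "x \<in> Xtorus f" and px: "trop_pt v x = p"
    and q: "q = (- v (deval4 1 f x / deval4 0 f x), - v (deval4 2 f x / deval4 0 f x),
           - v (deval4 3 f x / deval4 0 f x))"
    using tt unfolding tropical_tangent_def by blast
  define m where "m = v (Poly_Mapping.lookup f \<alpha> * mon x \<alpha>)"
  have C: "deval4 i f x \<noteq> 0 \<and> v (deval4 i f x) = m - v (x i)" if "i \<le> 3" for i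
    unfolding m_def
    by (rule core[OF V x ka kb ab]) (use eq lt dif px that in auto)
  have x0: "x 0 = 1" using x unfolding Xtorus_def by simp
  have "v (deval4 i f x / deval4 0 f x) = - v (x i)" if "i \<le> 3" for i
    using C[OF that] C[of 0] v_div[OF V] x0 v_one[OF V] by simp
  then have "q = (v (x 1), v (x 2), v (x 3))" unfolding q by simp
  then show "q = - p" unfolding px[symmetric] trop_pt_def by simp
qed

end
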